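(* Let $n\ge1$ and $\nu,\rho\vdash n$. Then \[ LP^n_{\nu,\rho}=\sum_{\lambda,\mu\vdash n}\overline R_{\lambda,\nu}\,\overline R_{\mu,\rho}\,L^n_{\lambda,\mu}, \] where only partitions $\lambda$ refining $\nu$ and $\mu$ refining $\rho$ contribute.
   Context: Work on the set $[n]\cup[\hat n]=\{1,\dots,n,\hat1,\dots,\hat n\}$; permutations are composed right to left, and a pairing is a fixed-point-free involution of this set. Let $f_1=(1\,\hat n)(2\,\hat1)(3\,\hat2)\cdots(n\,\widehat{n-1})$ and $f_2=(1\,\hat1)(2\,\hat2)\cdots(n\,\hat n)$. For a partition $\lambda$, $\lambda\lambda$ denotes the partition with parts $\lambda_1,\lambda_1,\lambda_2,\lambda_2,\dots$ and $\mathcal C_{\lambda\lambda}$ the set of permutations of $[n]\cup[\hat n]$ of cycle type $\lambda\lambda$. $L^n_{\lambda,\mu}$ is the number of pairings $f_3$ with $f_3\circ f_1\in\mathcal C_{\lambda\lambda}$ and $f_3\circ f_2\in\mathcal C_{\mu\mu}$. A set partition of $[n]\cup[\hat n]$ with all blocks of even size has half-type $\lambda$ if its block sizes are $2\lambda_1,2\lambda_2,\dots$; it is stable by a permutation $f$ if $f$ maps each block onto itself. $LP^n_{\lambda,\mu}$ is the number of triples $(f_3,\pi_1,\pi_2)$ where $f_3$ is a pairing, $\pi_1,\pi_2$ are set partitions of $[n]\cup[\hat n]$ with blocks of even size, of half-types $\lambda$ and $\mu$ respectively, $\pi_1$ is stable by $f_1$ and $f_3$, and $\pi_2$ is stable by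 $f_2$ and $f_3$. For partitions $\lambda,\nu\vdash n$, $\overline R_{\lambda,\nu}$ is the number of (unordered) set partitions $\{B_1,\dots,B_{\ell(\nu)}\}$ of $\{1,\dots,\ell(\lambda)\}$ such that the multiset of block sums $\{\sum_{i\in B_j}\lambda_i\}_j$ equals the multiset of parts of $\nu$. *)

theory Defs
  imports "HOL-Combinatorics.Permutations" "HOL-Combinatorics.Orbits"
          "HOL-Library.Multiset" "HOL-Library.Disjoint_Sets"
begin

(* Ground set [n] \<union> [n-hat]: (i, False) encodes i, (i, True) encodes i-hat, 1 \<le> i \<le> n. *)
definition ground :: "nat \<Rightarrow> (nat \<times> bool) set" where
  "ground n = {1..n} \<times> UNIV"

definition is_partition :: "nat \<Rightarrow> nat list \<Rightarrow> bool" where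
  "is_partition n lam \<longleftrightarrow> sorted_wrt (\<ge>) lam \<and> (\<forall>x\<in>set lam. 0 < x) \<and> sum_list lam = n"

definition partitions :: "nat \<Rightarrow> nat list set" where
  "partitions n = {lam. is_partition n lam}"

(* f1 = (1 n^)(2 1^)(3 2^)...(n (n-1)^) *)
definition f1 :: "nat \<Rightarrow> nat \<times> bool \<Rightarrow> nat \<times> bool" where
  "f1 n x = (if x \<in> ground n then
     (case x of (i, False) \<Rightarrow> (if i = 1 then n else i - 1, True)
              | (j, True) \<Rightarrow> (if j = n then 1 else j + 1, False))
     else x)"

definition f2 :: "nat \<Rightarrow> nat \<times> bool \<Rightarrow> nat \<times> bool" where
  "f2 n x = (if x \<in> ground n then (fst x, \<not> snd x) else x)"

definition pairing :: "nat \<Rightarrow> (nat \<times> bool \<Rightarrow> nat \<times> bool) \<Rightarrow> bool" where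
  "pairing n f \<longleftrightarrow> f permutes ground n \<and> (\<forall>x\<in>ground n. f (f x) = x \<and> f x \<noteq> x)"

definition cycle_type :: "'a set \<Rightarrow> ('a \<Rightarrow> 'a) \<Rightarrow> nat multiset" where
  "cycle_type A s = image_mset card (mset_set ((\<lambda>x. orbit s x) ` A))"

definition double_parts :: "nat list \<Rightarrow> nat multiset" where
  "double_parts lam = mset lam + mset lam"

definition L :: "nat \<Rightarrow> nat list \<Rightarrow> nat list \<Rightarrow> nat" where
  "L n lam mu = card {f3. pairing n f3
      \<and> cycle_type (ground n) (f3 \<circ> f1 n) = double_parts lam
      \<and> cycle_type (ground n) (f3 \<circ> f2 n) = double_parts mu}"

definition half_type :: "nat \<Rightarrow> nat list \<Rightarrow> (nat \<times> bool) set set \<Rightarrow> bool" where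
  "half_type n lam P \<longleftrightarrow> partition_on (ground n) P
      \<and> image_mset card (mset_set P) = image_mset (\<lambda>k. 2 * k) (mset lam)"

definition stable :: "('a \<Rightarrow> 'a) \<Rightarrow> 'a set set \<Rightarrow> bool" where
  "stable f P \<longleftrightarrow> (\<forall>B\<in>P. f ` B = B)"

definition LP :: "nat \<Rightarrow> nat list \<Rightarrow> nat list \<Rightarrow> nat" where
  "LP n lam mu = card {(f3, p1, p2). pairing n f3
      \<and> half_type n lam p1 \<and> half_type n mu p2
      \<and> stable (f1 n) p1 \<and> stable f3 p1
      \<and> stable (f2 n) p2 \<and> stable f3 p2}"

(* R-bar: set partitions of the index set {1..l(lam)} (0-based here) whose block sums give nu *)
definition Rbar :: "nat list \<Rightarrow> nat list \<Rightarrow> nat" where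
  "Rbar lam nu = card {P. partition_on {0..<length lam} P
      \<and> image_mset (\<lambda>B. \<Sum>i\<in>B. lam ! i) (mset_set P) = mset nu}"

end

theory Submission
  imports Defs "HOL-Combinatorics.List_Permutation"
begin

locale twopair =
  fixes G :: "'a set" and a b :: "'a \<Rightarrow> 'a"
  assumes finG: "finite G" and a_perm: "a permutes G" and b_perm: "b permutes G"
    and a_inv: "\<And>x. x \<in> G \<Longrightarrow> a (a x) = x" and a_nf: "\<And>x. x \<in> G \<Longrightarrow> a x \<noteq> x"
    and b_inv: "\<And>x. x \<in> G \<Longrightarrow> b (b x) = x" and b_nf: "\<And>x. x \<in> G \<Longrightarrow> b x \<noteq> x"
begin

definition s where "s = a \<circ> b"

lemma s_perm: "s permutes G"
  unfolding s_def by (intro permutes_compose a_perm b_perm)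

lemma s_permutation: "permutation s"
  using s_perm finG permutation_permutes by blast

lemma aG: "x \<in> G \<Longrightarrow> a x \<in> G" using a_perm by (simp add: permutes_in_image)
lemma bG: "x \<in> G \<Longrightarrow> b x \<in> G" using b_perm by (simp add: permutes_in_image)
lemma sG: "x \<in> G \<Longrightarrow> s x \<in> G" using s_perm by (simp add: permutes_in_image)
lemma spowG: "x \<in> G \<Longrightarrow> (s ^^ k) x \<in> G"
  by (induct k) (auto simp: sG)

lemma orb_self: "x \<in> orbit s x"
  by (rule permutation_self_in_orbit[OF s_permutation])

lemma orb_eq: "y \<in> orbit s x \<Longrightarrow> orbit s y = orbit s x"
  by (rule orbit_cyclic_eq3[OF cyclic_on_orbit'[OF s_permutation]])

lemma orb_sym: "y \<in> orbit s x \<Longrightarrow> x \<in> orbit s y"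
  using orb_eq orb_self by metis

lemma orb_pow: "orbit s x = {(s ^^ k) x | k. True}"
  using orbit_altdef_permutation[OF s_permutation] .

lemma orb_G: "x \<in> G \<Longrightarrow> orbit s x \<subseteq> G"
  using permutes_orbit_subset[OF s_perm] .

lemma orb_fin: "x \<in> G \<Longrightarrow> finite (orbit s x)"
  using orb_G finG finite_subset by blast

lemma sas1: "y \<in> G \<Longrightarrow> s (a (s y)) = a y"
  unfolding s_def using a_inv b_inv bG by simp

lemma sas: "x \<in> G \<Longrightarrow> (s ^^ k) (a ((s ^^ k) x)) = a x"
proof (induct k)
  case 0 then show ?case by simp
next
  case (Suc k)
  have e1: "(s ^^ Suc k) x = s ((s ^^ k) x)" by simp
  have e2: "\<And>z. (s ^^ Suc k) z = (s ^^ k) (s z)" by (simp add: funpow_swap1)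
  have "(s ^^ Suc k) (a ((s ^^ Suc k) x)) = (s ^^ k) (s (a (s ((s ^^ k) x))))"
    by (subst e1) (rule e2)
  also have "\<dots> = (s ^^ k) (a ((s ^^ k) x))" using sas1 spowG Suc by simp
  finally show ?case using Suc by simp
qed

lemma b_as: "y \<in> G \<Longrightarrow> b y = a (s y)"
  unfolding s_def using a_inv bG by simp

lemma inj_spow: "inj (s ^^ k)"
  using s_permutation inj_fn permutation_bijective bij_is_inj by blast

lemma a_orb: assumes "x \<in> G" "y \<in> orbit s x" shows "a y \<in> orbit s (a x)"
proof -
  obtain k where y: "y = (s ^^ k) x" using assms(2) orb_pow by auto
  have "a x = (s ^^ k) (a y)" using sas[OF assms(1), of k] y by simp
  then have "a x \<in> orbit s (a y)" unfolding orb_pow[of "a y"] by blast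
  then show ?thesis using orb_sym by blast
qed

lemma a_not_in: assumes x: "x \<in> G" shows "a x \<notin> orbit s x"
proof
  assume "a x \<in> orbit s x"
  then obtain k where k: "a x = (s ^^ k) x" using orb_pow by auto
  show False
  proof (cases "even k")
    case True
    then obtain j where j: "k = j + j" by (metis evenE mult_2)
    define y where "y = (s ^^ j) x"
    have yG: "y \<in> G" using spowG x y_def by simp
    have "(s ^^ j) (a y) = (s ^^ j) y"
      using sas[OF x, of j] k j by (simp add: y_def funpow_add)
    then have "a y = y" using inj_spow injD by metis
    then show False using a_nf yG by blast
  next
    case False
    then obtain j where j: "k = Suc (j + j)" by (metis oddE mult_2 Suc_eq_plus1)
    define y where "y = (s ^^ j) x"
    have yG: "y \<in> G" using spowG x y_def by simp
    have "b y = a ((s ^^ Suc j) x)" using b_as[OF yG] by (simp add: y_def)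
    then have "(s ^^ Suc j) (b y) = a x" using sas[OF x, of "Suc j"] by simp
    also have "\<dots> = (s ^^ Suc j) y" using k j by (simp add: y_def funpow_add)
    finally have "b y = y" using inj_spow injD by metis
    then show False using b_nf yG by blast
  qed
qed

lemma card_orb_a: assumes x: "x \<in> G" shows "card (orbit s (a x)) = card (orbit s x)"
proof (rule antisym)
  have ax: "a x \<in> G" using aG x .
  have inj: "inj a" using a_perm permutes_inj by blast
  have "a ` orbit s x \<subseteq> orbit s (a x)" using a_orb x by blast
  then have "card (orbit s x) \<le> card (orbit s (a x))"
    using card_inj_on_le inj orb_fin ax by (metis inj_on_subset subset_UNIV)
  moreover have "a ` orbit s (a x) \<subseteq> orbit s x" using a_orb[OF ax] a_inv x by auto
  then have "card (orbit s (a x)) \<le> card (orbit s x)"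
    using card_inj_on_le inj orb_fin x by (metis inj_on_subset subset_UNIV)
  ultimately show "card (orbit s (a x)) \<le> card (orbit s x)" "card (orbit s x) \<le> card (orbit s (a x))" by auto
qed

end

context twopair begin

definition C where "C x = orbit s x \<union> orbit s (a x)"

lemma C_self: "x \<in> C x" unfolding C_def using orb_self by blast
lemma C_a: "a x \<in> C x" unfolding C_def using orb_self by blast
lemma C_b: assumes "x \<in> G" shows "b x \<in> C x"
proof -
  have "s x \<in> orbit s x" by (rule orbit.base)
  then have "a (s x) \<in> orbit s (a x)" using a_orb assms by blast
  then show ?thesis unfolding C_def using b_as assms by simp
qed
lemma C_G: "x \<in> G \<Longrightarrow> C x \<subseteq> G" unfolding C_def using orb_G aG by blast

lemma C_eq: assumes x: "x \<in> G" and z: "z \<in> C x" shows "C z = C x"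
proof -
  have ax: "a x \<in> G" using aG x .
  show ?thesis
  proof (cases "z \<in> orbit s x")
    case True
    then have "orbit s z = orbit s x" by (rule orb_eq)
    moreover have "orbit s (a z) = orbit s (a x)" using a_orb[OF x True] orb_eq by blast
    ultimately show ?thesis unfolding C_def by simp
  next
    case False
    then have z2: "z \<in> orbit s (a x)" using z unfolding C_def by blast
    then have "orbit s z = orbit s (a x)" by (rule orb_eq)
    moreover have "a z \<in> orbit s x" using a_orb[OF ax z2] a_inv x by simp
    then have "orbit s (a z) = orbit s x" by (rule orb_eq)
    ultimately show ?thesis unfolding C_def by blast
  qed
qed

lemma orb_disj: assumes x: "x \<in> G" shows "orbit s x \<inter> orbit s (a x) = {}"
proof (rule ccontr)
  assume "orbit s x \<inter> orbit s (a x) \<noteq> {}"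
  then obtain w where w: "w \<in> orbit s x" "w \<in> orbit s (a x)" by blast
  then have "orbit s (a x) = orbit s x" using orb_eq by metis
  then show False using a_not_in[OF x] orb_self by metis
qed

lemma C_card: assumes x: "x \<in> G" shows "card (C x) = 2 * card (orbit s x)"
proof -
  have "card (C x) = card (orbit s x) + card (orbit s (a x))"
    unfolding C_def using orb_disj[OF x] orb_fin x aG by (simp add: card_Un_disjoint)
  then show ?thesis using card_orb_a[OF x] by simp
qed

definition Ocl where "Ocl = C ` G"

lemma Ocl_fin: "finite Ocl" unfolding Ocl_def using finG by simp

lemma Ocl_part: "partition_on G Ocl"
proof (rule partition_onI)
  show "\<Union> Ocl = G" unfolding Ocl_def using C_G C_self by blast
  show "{} \<notin> Ocl" unfolding Ocl_def using C_self by blast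
  fix p q assume "p \<in> Ocl" "q \<in> Ocl" "p \<noteq> q"
  then obtain x y where xy: "x \<in> G" "y \<in> G" "p = C x" "q = C y" unfolding Ocl_def by blast
  show "disjnt p q"
  proof (rule ccontr)
    assume "\<not> disjnt p q"
    then obtain w where "w \<in> C x" "w \<in> C y" using xy unfolding disjnt_def by blast
    then have "C x = C y" using C_eq xy by metis
    then show False using \<open>p \<noteq> q\<close> xy by simp
  qed
qed

lemma Ocl_class: "c \<in> Ocl \<Longrightarrow> z \<in> c \<Longrightarrow> c = C z"
  unfolding Ocl_def using C_eq by blast

lemma stable_iff: assumes p: "partition_on G p"
  shows "(stable b p \<and> stable a p) \<longleftrightarrow> (\<forall>B\<in>p. \<forall>c\<in>Ocl. c \<subseteq> B \<or> c \<inter> B = {})"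
proof
  assume st: "stable b p \<and> stable a p"
  show "\<forall>B\<in>p. \<forall>c\<in>Ocl. c \<subseteq> B \<or> c \<inter> B = {}"
  proof (intro ballI)
    fix B c assume B: "B \<in> p" and c: "c \<in> Ocl"
    have aB: "a ` B = B" and bB: "b ` B = B" using st B unfolding stable_def by auto
    have sB: "\<And>w. w \<in> B \<Longrightarrow> s w \<in> B" unfolding s_def using aB bB by auto
    have orbB: "\<And>z w. z \<in> B \<Longrightarrow> w \<in> orbit s z \<Longrightarrow> w \<in> B"
    proof -
      fix z w assume z: "z \<in> B" and w: "w \<in> orbit s z"
      from w show "w \<in> B" by (induct rule: orbit.induct) (auto intro: sB z)
    qed
    show "c \<subseteq> B \<or> c \<inter> B = {}"
    proof (cases "c \<inter> B = {}")
      case False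
      then obtain z where z: "z \<in> c" "z \<in> B" by blast
      have "a z \<in> B" using aB z by blast
      then have "C z \<subseteq> B" unfolding C_def using orbB z by blast
      then show ?thesis using Ocl_class[OF c z(1)] by simp
    qed simp
  qed
next
  assume H: "\<forall>B\<in>p. \<forall>c\<in>Ocl. c \<subseteq> B \<or> c \<inter> B = {}"
  have sub: "\<And>B x. B \<in> p \<Longrightarrow> x \<in> B \<Longrightarrow> C x \<subseteq> B"
  proof -
    fix B x assume B: "B \<in> p" and x: "x \<in> B"
    have xG: "x \<in> G" using p B x unfolding partition_on_def by blast
    have "C x \<in> Ocl" unfolding Ocl_def using xG by blast
    then show "C x \<subseteq> B" using H B x C_self by blast
  qed
  have BG: "\<And>B. B \<in> p \<Longrightarrow> B \<subseteq> G" using p unfolding partition_on_def by blast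
  have bin: "\<And>B x. B \<in> p \<Longrightarrow> x \<in> B \<Longrightarrow> b x \<in> B"
  proof -
    fix B x assume B: "B \<in> p" and x: "x \<in> B"
    then have "x \<in> G" using BG by blast
    then have "b x \<in> C x" by (rule C_b)
    then show "b x \<in> B" using sub[OF B x] by blast
  qed
  have ain: "\<And>B x. B \<in> p \<Longrightarrow> x \<in> B \<Longrightarrow> a x \<in> B"
    using sub C_a by blast
  have binv: "\<And>B x. B \<in> p \<Longrightarrow> x \<in> B \<Longrightarrow> b (b x) = x"
    using BG b_inv by blast
  have ainv: "\<And>B x. B \<in> p \<Longrightarrow> x \<in> B \<Longrightarrow> a (a x) = x"
    using BG a_inv by blast
  show "stable b p \<and> stable a p" unfolding stable_def
  proof (intro conjI ballI equalityI subsetI)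
    fix B y assume "B \<in> p" "y \<in> b ` B" then show "y \<in> B" using bin by blast
  next
    fix B y assume B: "B \<in> p" and y: "y \<in> B"
    then have "y = b (b y)" "b y \<in> B" using binv bin by auto
    then show "y \<in> b ` B" by (metis imageI)
  next
    fix B y assume "B \<in> p" "y \<in> a ` B" then show "y \<in> B" using ain by blast
  next
    fix B y assume B: "B \<in> p" and y: "y \<in> B"
    then have "y = a (a y)" "a y \<in> B" using ainv ain by auto
    then show "y \<in> a ` B" by (metis imageI)
  qed
qed

end

lemma mset_double_inj:
  assumes "image_mset (\<lambda>k::nat. 2 * k) M = image_mset (\<lambda>k. 2 * k) N" shows "M = N"
proof -
  have "image_mset (\<lambda>k. k div 2) (image_mset (\<lambda>k::nat. 2 * k) M) = M" for M
    by (simp add: multiset.map_comp o_def)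
  from this[of M] this[of N] assms show ?thesis by metis
qed

lemma coarsen:
  fixes G :: "'a set" and Oc :: "'a set set" and cs :: "'a set list" and lam nu :: "nat list"
  assumes finG: "finite G" and part: "partition_on G Oc" and dist: "distinct cs" and setcs: "set cs = Oc"
    and len: "length cs = length lam" and cardcs: "\<And>i. i < length lam \<Longrightarrow> card (cs ! i) = 2 * lam ! i"
  shows "card {p. partition_on G p \<and> (\<forall>B\<in>p. \<forall>c\<in>Oc. c \<subseteq> B \<or> c \<inter> B = {})
            \<and> image_mset card (mset_set p) = image_mset (\<lambda>k. 2 * k) (mset nu)} = Rbar lam nu"
proof -
  define m where "m = length lam"
  define I where "I = {0..<m}"
  define U where "U B = (\<Union>i\<in>B. cs ! i)" for B
  define R where "R = {P. partition_on I P \<and> image_mset (\<lambda>B. \<Sum>i\<in>B. lam ! i) (mset_set P) = mset nu}"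
  define T where "T = {p. partition_on G p \<and> (\<forall>B\<in>p. \<forall>c\<in>Oc. c \<subseteq> B \<or> c \<inter> B = {})
            \<and> image_mset card (mset_set p) = image_mset (\<lambda>k. 2 * k) (mset nu)}"
  define \<Phi> where "\<Phi> P = U ` P" for P
  define \<Psi> where "\<Psi> p = (\<lambda>B. {i\<in>I. cs ! i \<subseteq> B}) ` p" for p
  have csO: "i \<in> I \<Longrightarrow> cs ! i \<in> Oc" for i
  proof -
    assume "i \<in> I" then have "i < length cs" by (simp add: I_def m_def len)
    then show ?thesis by (metis nth_mem setcs)
  qed
  have csne: "i \<in> I \<Longrightarrow> cs ! i \<noteq> {}" for i using csO partition_onD3[OF part] by metis
  have csG: "i \<in> I \<Longrightarrow> cs ! i \<subseteq> G" for i using csO partition_onD1[OF part] by (metis Union_upper)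
  have csdisj: "i \<in> I \<Longrightarrow> j \<in> I \<Longrightarrow> i \<noteq> j \<Longrightarrow> cs ! i \<inter> cs ! j = {}" for i j
  proof -
    assume ij: "i \<in> I" "j \<in> I" "i \<noteq> j"
    then have "cs ! i \<noteq> cs ! j" using dist len unfolding I_def m_def by (simp add: nth_eq_iff_index_eq)
    then show ?thesis using csO[OF ij(1)] csO[OF ij(2)] disjointD[OF partition_onD2[OF part]] by blast
  qed
  have csmeet: "i \<in> I \<Longrightarrow> j \<in> I \<Longrightarrow> z \<in> cs ! i \<Longrightarrow> z \<in> cs ! j \<Longrightarrow> i = j" for i j z
    using csdisj by blast
  have Gcover: "x \<in> G \<Longrightarrow> \<exists>i\<in>I. x \<in> cs ! i" for x
  proof -
    assume "x \<in> G"
    then obtain c where "c \<in> Oc" "x \<in> c" using partition_onD1[OF part] by blast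
    then obtain i where "i < length cs" "cs ! i = c" using setcs by (metis in_set_conv_nth)
    then show ?thesis using \<open>x \<in> c\<close> len unfolding I_def m_def by auto
  qed
  have f3: "B \<subseteq> I \<Longrightarrow> {i\<in>I. cs ! i \<subseteq> U B} = B" for B
  proof -
    assume B: "B \<subseteq> I"
    show ?thesis
    proof (intro equalityI subsetI)
      fix i assume "i \<in> {i\<in>I. cs ! i \<subseteq> U B}"
      then have i: "i \<in> I" "cs ! i \<subseteq> U B" by auto
      obtain z where z: "z \<in> cs ! i" using csne[OF i(1)] by blast
      then obtain j where "j \<in> B" "z \<in> cs ! j" using i unfolding U_def by blast
      then show "i \<in> B" using csmeet[OF i(1) _ z] B by blast
    next
      fix i assume "i \<in> B" then show "i \<in> {i\<in>I. cs ! i \<subseteq> U B}" using B unfolding U_def by blast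
    qed
  qed
  have f4: "inj_on U (Pow I)" by (rule inj_onI) (metis PowD f3)
  have finI: "finite I" unfolding I_def by simp
  have f5: "B \<subseteq> I \<Longrightarrow> card (U B) = 2 * (\<Sum>i\<in>B. lam ! i)" for B
  proof -
    assume B: "B \<subseteq> I"
    have finB: "finite B" using B finI finite_subset by blast
    have "card (U B) = (\<Sum>i\<in>B. card (cs ! i))" unfolding U_def
    proof (rule card_UN_disjoint[OF finB])
      show "\<forall>i\<in>B. finite (cs ! i)" using B csG finG by (meson finite_subset subsetD)
      show "\<forall>i\<in>B. \<forall>j\<in>B. i \<noteq> j \<longrightarrow> cs ! i \<inter> cs ! j = {}" using B csdisj by blast
    qed
    also have "\<dots> = (\<Sum>i\<in>B. 2 * lam ! i)" using B cardcs unfolding I_def m_def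
      by (intro sum.cong) auto
    finally show ?thesis by (simp add: sum_distrib_left)
  qed
  have f6: "P \<subseteq> Pow I \<Longrightarrow> image_mset card (mset_set (U ` P))
      = image_mset (\<lambda>k. 2 * k) (image_mset (\<lambda>B. \<Sum>i\<in>B. lam ! i) (mset_set P))" for P
  proof -
    assume P: "P \<subseteq> Pow I"
    have finP: "finite P" using P finI by (meson finite_Pow_iff finite_subset)
    have "mset_set (U ` P) = image_mset U (mset_set P)"
      using f4 P by (metis image_mset_mset_set inj_on_subset)
    then have "image_mset card (mset_set (U ` P)) = image_mset (card \<circ> U) (mset_set P)"
      by (simp add: multiset.map_comp)
    also have "\<dots> = image_mset ((\<lambda>k. 2 * k) \<circ> (\<lambda>B. \<Sum>i\<in>B. lam ! i)) (mset_set P)"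
      using P finP f5 by (intro image_mset_cong) auto
    finally show ?thesis by (simp add: multiset.map_comp)
  qed
  have f8: "partition_on G p \<Longrightarrow> (\<forall>B\<in>p. \<forall>c\<in>Oc. c \<subseteq> B \<or> c \<inter> B = {}) \<Longrightarrow> B \<in> p
      \<Longrightarrow> U {i\<in>I. cs ! i \<subseteq> B} = B" for p B
  proof -
    assume p: "partition_on G p" and H: "\<forall>B\<in>p. \<forall>c\<in>Oc. c \<subseteq> B \<or> c \<inter> B = {}" and B: "B \<in> p"
    show ?thesis
    proof (intro equalityI subsetI)
      fix x assume "x \<in> U {i\<in>I. cs ! i \<subseteq> B}" then show "x \<in> B" unfolding U_def by blast
    next
      fix x assume x: "x \<in> B"
      then have "x \<in> G" using partition_onD1[OF p] B by blast
      then obtain i where i: "i \<in> I" "x \<in> cs ! i" using Gcover by blast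
      then have "cs ! i \<subseteq> B" using H B csO[OF i(1)] x by blast
      then show "x \<in> U {i\<in>I. cs ! i \<subseteq> B}" using i unfolding U_def by blast
    qed
  qed
  have bij: "bij_betw \<Phi> R T"
  proof (rule bij_betw_byWitness[where f' = \<Psi>])
    show "\<forall>P\<in>R. \<Psi> (\<Phi> P) = P"
    proof
      fix P assume "P \<in> R"
      then have "partition_on I P" unfolding R_def by blast
      then have PI: "\<And>B. B \<in> P \<Longrightarrow> B \<subseteq> I" using partition_onD1 by blast
      have "\<Psi> (\<Phi> P) = (\<lambda>B. {i\<in>I. cs ! i \<subseteq> U B}) ` P" unfolding \<Psi>_def \<Phi>_def by (simp add: image_image)
      also have "\<dots> = (\<lambda>B. B) ` P" using PI f3 by (intro image_cong) auto
      finally show "\<Psi> (\<Phi> P) = P" by simp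
    qed
    show "\<forall>p\<in>T. \<Phi> (\<Psi> p) = p"
    proof
      fix p assume "p \<in> T"
      then have p: "partition_on G p" "\<forall>B\<in>p. \<forall>c\<in>Oc. c \<subseteq> B \<or> c \<inter> B = {}" unfolding T_def by auto
      have "\<Phi> (\<Psi> p) = (\<lambda>B. U {i\<in>I. cs ! i \<subseteq> B}) ` p" unfolding \<Psi>_def \<Phi>_def by (simp add: image_image)
      also have "\<dots> = (\<lambda>B. B) ` p" using f8[OF p] by (intro image_cong) auto
      finally show "\<Phi> (\<Psi> p) = p" by simp
    qed
    show "\<Phi> ` R \<subseteq> T"
    proof
      fix Q assume "Q \<in> \<Phi> ` R"
      then obtain P where P: "P \<in> R" "Q = U ` P" unfolding \<Phi>_def by blast
      have Ppart: "partition_on I P" and Pm: "image_mset (\<lambda>B. \<Sum>i\<in>B. lam ! i) (mset_set P) = mset nu"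
        using P(1) unfolding R_def by auto
      have PI: "P \<subseteq> Pow I" using partition_onD1[OF Ppart] by blast
      have UnP: "\<Union> P = I" and disjP: "disjoint P" and neP: "{} \<notin> P" using Ppart unfolding partition_on_def by auto
      have "partition_on G Q"
      proof (rule partition_onI)
        show "\<Union> Q = G"
        proof (intro equalityI subsetI)
          fix x assume "x \<in> \<Union> Q"
          then show "x \<in> G" using P(2) PI csG unfolding U_def by blast
        next
          fix x assume "x \<in> G"
          then obtain i where "i \<in> I" "x \<in> cs ! i" using Gcover by blast
          then obtain B where "B \<in> P" "i \<in> B" using UnP by blast
          then show "x \<in> \<Union> Q" using P(2) \<open>x \<in> cs ! i\<close> unfolding U_def by blast
        qed
        show "{} \<notin> Q"
        proof
          assume "{} \<in> Q"
          then obtain B where B: "B \<in> P" "U B = {}" using P(2) by auto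
          then obtain i where "i \<in> B" using neP by (metis all_not_in_conv)
          then show False using B csne PI unfolding U_def by blast
        qed
        fix X Y assume "X \<in> Q" "Y \<in> Q" "X \<noteq> Y"
        then obtain B1 B2 where B: "B1 \<in> P" "B2 \<in> P" "X = U B1" "Y = U B2" "B1 \<noteq> B2" using P(2) by auto
        then have "B1 \<inter> B2 = {}" using disjointD[OF disjP B(1,2)] by blast
        then show "disjnt X Y" unfolding disjnt_def B(3,4) U_def
          using csmeet PI B(1,2) by blast
      qed
      moreover have "\<forall>B\<in>Q. \<forall>c\<in>Oc. c \<subseteq> B \<or> c \<inter> B = {}"
      proof (intro ballI)
        fix X c assume X: "X \<in> Q" and c: "c \<in> Oc"
        then obtain B where B: "B \<in> P" "X = U B" using P(2) by auto
        obtain j where j: "j \<in> I" "c = cs ! j" using c setcs len unfolding I_def m_def by (metis atLeastLessThan_iff in_set_conv_nth zero_le)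
        show "c \<subseteq> X \<or> c \<inter> X = {}"
        proof (cases "c \<inter> X = {}")
          case False
          then obtain z i where "i \<in> B" "z \<in> cs ! i" "z \<in> cs ! j" using B j unfolding U_def by blast
          then have "i = j" using csmeet j PI B(1) by blast
          then show ?thesis using \<open>i \<in> B\<close> B j unfolding U_def by blast
        qed simp
      qed
      moreover have "image_mset card (mset_set Q) = image_mset (\<lambda>k. 2 * k) (mset nu)"
        using f6[OF PI] P(2) Pm by simp
      ultimately show "Q \<in> T" unfolding T_def by blast
    qed
    show "\<Psi> ` T \<subseteq> R"
    proof
      fix Q assume "Q \<in> \<Psi> ` T"
      then obtain p where p: "p \<in> T" "Q = \<Psi> p" by blast
      have ppart: "partition_on G p" and pH: "\<forall>B\<in>p. \<forall>c\<in>Oc. c \<subseteq> B \<or> c \<inter> B = {}"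
        and pm: "image_mset card (mset_set p) = image_mset (\<lambda>k. 2 * k) (mset nu)" using p(1) unfolding T_def by auto
      have Unp: "\<Union> p = G" and disjp: "disjoint p" and nep: "{} \<notin> p" using ppart unfolding partition_on_def by auto
      have QI: "Q \<subseteq> Pow I" using p(2) unfolding \<Psi>_def by blast
      have "partition_on I Q"
      proof (rule partition_onI)
        show "\<Union> Q = I"
        proof (intro equalityI subsetI)
          fix i assume "i \<in> \<Union> Q" then show "i \<in> I" using QI by blast
        next
          fix i assume i: "i \<in> I"
          obtain z where z: "z \<in> cs ! i" using csne[OF i] by blast
          then obtain B where B: "B \<in> p" "z \<in> B" using csG[OF i] Unp by blast
          then have "cs ! i \<subseteq> B" using pH csO[OF i] z by blast
          then show "i \<in> \<Union> Q" using B i p(2) unfolding \<Psi>_def by blast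
        qed
        show "{} \<notin> Q"
        proof
          assume "{} \<in> Q"
          then obtain B where B: "B \<in> p" "{i\<in>I. cs ! i \<subseteq> B} = {}" using p(2) unfolding \<Psi>_def by auto
          then obtain x where x: "x \<in> B" using nep by (metis all_not_in_conv)
          then have "x \<in> G" using B Unp by blast
          then obtain i where i: "i \<in> I" "x \<in> cs ! i" using Gcover by blast
          then have "cs ! i \<subseteq> B" using pH csO[OF i(1)] x B by blast
          then show False using B i by blast
        qed
        fix X Y assume "X \<in> Q" "Y \<in> Q" "X \<noteq> Y"
        then obtain B1 B2 where B: "B1 \<in> p" "B2 \<in> p" "X = {i\<in>I. cs ! i \<subseteq> B1}" "Y = {i\<in>I. cs ! i \<subseteq> B2}"
          using p(2) unfolding \<Psi>_def by auto
        then have "B1 \<noteq> B2" using \<open>X \<noteq> Y\<close> by blast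
        then have "B1 \<inter> B2 = {}" using disjointD[OF disjp B(1,2)] by blast
        then show "disjnt X Y" unfolding disjnt_def B(3,4) using csne by blast
      qed
      moreover have "image_mset (\<lambda>B. \<Sum>i\<in>B. lam ! i) (mset_set Q) = mset nu"
      proof -
        have "\<Phi> Q = p" using p(2) \<open>\<forall>p\<in>T. \<Phi> (\<Psi> p) = p\<close> p(1) by simp
        then have "image_mset (\<lambda>k. 2 * k) (image_mset (\<lambda>B. \<Sum>i\<in>B. lam ! i) (mset_set Q))
            = image_mset (\<lambda>k. 2 * k) (mset nu)" using f6[OF QI] pm unfolding \<Phi>_def by simp
        then show ?thesis by (rule mset_double_inj)
      qed
      ultimately show "Q \<in> R" unfolding R_def by blast
    qed
  qed
  then have "card T = card R" by (simp add: bij_betw_same_card)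
  then show ?thesis unfolding T_def R_def Rbar_def I_def m_def by simp
qed

context twopair begin

definition hc :: "'a set \<Rightarrow> nat" where "hc c = card c div 2"
definition r where "r c = (SOME x. x \<in> c)"

lemma r_props: assumes c: "c \<in> Ocl" shows "r c \<in> c" "r c \<in> G" "c = C (r c)"
proof -
  have "c \<noteq> {}" using partition_onD3[OF Ocl_part] c by blast
  then show rc: "r c \<in> c" unfolding r_def by (metis some_in_eq)
  then show "r c \<in> G" using partition_onD1[OF Ocl_part] c by blast
  show "c = C (r c)" using Ocl_class[OF c rc] .
qed

lemma Ocl_card: assumes c: "c \<in> Ocl"
  shows "card c = 2 * hc c" "hc c > 0" "card (orbit s (r c)) = hc c"
proof -
  have rG: "r c \<in> G" using r_props[OF c] by blast
  have cc: "card c = 2 * card (orbit s (r c))" using C_card[OF rG] r_props(3)[OF c] by simp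
  then show "card c = 2 * hc c" "card (orbit s (r c)) = hc c" unfolding hc_def by auto
  have "card (orbit s (r c)) > 0" using orb_fin[OF rG] orb_self by (metis card_gt_0_iff empty_iff)
  then show "hc c > 0" using cc unfolding hc_def by simp
qed

lemma C_a_eq: "x \<in> G \<Longrightarrow> C (a x) = C x"
  using C_eq C_a by blast

lemma ct:
  assumes dcs: "distinct cs" and scs: "set cs = Ocl"
  shows "cycle_type G s = mset (map hc cs) + mset (map hc cs)"
proof -
  define o1 where "o1 c = orbit s (r c)" for c
  define o2 where "o2 c = orbit s (a (r c))" for c
  have rp: "\<And>c. c \<in> set cs \<Longrightarrow> r c \<in> G \<and> c = C (r c)" using r_props scs by blast
  have Orbs: "(\<lambda>x. orbit s x) ` G = set (map o1 cs @ map o2 cs)"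
  proof (intro equalityI subsetI)
    fix d assume "d \<in> (\<lambda>x. orbit s x) ` G"
    then obtain x where x: "x \<in> G" "d = orbit s x" by blast
    have "C x \<in> set cs" using x scs unfolding Ocl_def by blast
    then have cx: "C x = C (r (C x))" "r (C x) \<in> G" using rp by blast+
    have "x \<in> orbit s (r (C x)) \<or> x \<in> orbit s (a (r (C x)))" using C_self[of x] cx unfolding C_def by blast
    then have "d = o1 (C x) \<or> d = o2 (C x)" using x orb_eq unfolding o1_def o2_def by blast
    then show "d \<in> set (map o1 cs @ map o2 cs)" using \<open>C x \<in> set cs\<close> by auto
  next
    fix d assume "d \<in> set (map o1 cs @ map o2 cs)"
    then obtain c where c: "c \<in> set cs" "d = o1 c \<or> d = o2 c" by auto
    then show "d \<in> (\<lambda>x. orbit s x) ` G" using rp[OF c(1)] aG unfolding o1_def o2_def by blast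
  qed
  have inj1: "inj_on o1 (set cs)"
  proof (rule inj_onI)
    fix c c' assume c: "c \<in> set cs" "c' \<in> set cs" "o1 c = o1 c'"
    then have "r c \<in> orbit s (r c')" using orb_self unfolding o1_def by metis
    then have "r c \<in> C (r c')" unfolding C_def by blast
    then show "c = c'" using C_eq rp c by metis
  qed
  have inj2: "inj_on o2 (set cs)"
  proof (rule inj_onI)
    fix c c' assume c: "c \<in> set cs" "c' \<in> set cs" "o2 c = o2 c'"
    then have "a (r c) \<in> orbit s (a (r c'))" using orb_self unfolding o2_def by metis
    then have "a (r c) \<in> C (r c')" unfolding C_def by blast
    then have "C (a (r c)) = C (r c')" using C_eq rp c by metis
    then show "c = c'" using C_a_eq rp c by metis
  qed
  have disj: "set (map o1 cs) \<inter> set (map o2 cs) = {}"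
  proof (rule ccontr)
    assume "set (map o1 cs) \<inter> set (map o2 cs) \<noteq> {}"
    then obtain c c' where c: "c \<in> set cs" "c' \<in> set cs" "o1 c = o2 c'" by auto
    then have "r c \<in> orbit s (a (r c'))" using orb_self unfolding o1_def o2_def by metis
    then have "r c \<in> C (r c')" unfolding C_def by blast
    then have "c = c'" using C_eq rp c by metis
    then have "orbit s (r c) = orbit s (a (r c))" using c unfolding o1_def o2_def by simp
    then show False using orb_disj[of "r c"] rp[OF c(1)] orb_self by (metis disjoint_iff)
  qed
  have dist: "distinct (map o1 cs @ map o2 cs)"
    using dcs inj1 inj2 disj by (simp add: distinct_map)
  have "cycle_type G s = image_mset card (mset (map o1 cs @ map o2 cs))"
    unfolding cycle_type_def Orbs mset_set_set[OF dist] ..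
  also have "\<dots> = mset (map (card \<circ> o1) cs) + mset (map (card \<circ> o2) cs)" by (simp add: multiset.map_comp)
  also have "map (card \<circ> o1) cs = map hc cs"
    using Ocl_card(3) scs unfolding o1_def by (intro map_cong) auto
  also have "map (card \<circ> o2) cs = map hc cs"
    using Ocl_card(3) scs card_orb_a rp unfolding o2_def by (intro map_cong) auto
  finally show ?thesis .
qed

lemma sum_hc:
  assumes dcs: "distinct cs" and scs: "set cs = Ocl"
  shows "2 * sum_list (map hc cs) = card G"
proof -
  have e: "map card cs = map (\<lambda>c. 2 * hc c) cs" using Ocl_card(1) scs by (intro map_cong) auto
  have "2 * sum_list (map hc cs) = sum_list (map (\<lambda>c. 2 * hc c) cs)" by (simp add: sum_list_const_mult)
  then have "2 * sum_list (map hc cs) = sum_list (map card cs)" by (simp only: e)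
  also have "\<dots> = sum card Ocl" using dcs scs by (simp add: sum_list_distinct_conv_sum_set)
  also have "\<dots> = card (\<Union> Ocl)"
    using partition_onD2[OF Ocl_part] partition_onD1[OF Ocl_part] finG
    by (intro card_Union_disjoint[symmetric]) (auto intro: finite_subset)
  also have "\<dots> = card G" using partition_onD1[OF Ocl_part] by simp
  finally show ?thesis .
qed

end

lemma mset_half: "M + M = N + (N :: 'b multiset) \<Longrightarrow> M = N"
  by (metis multiset_eq_iff count_union mult_2[symmetric] mult_cancel_left zero_neq_numeral)

context twopair begin

lemma type_ex: "\<exists>lam0. sorted_wrt (\<ge>) lam0 \<and> (\<forall>x\<in>set lam0. 0 < x) \<and> 2 * sum_list lam0 = card G
   \<and> cycle_type G s = double_parts lam0"
proof -
  obtain cs where cs: "set cs = Ocl" "distinct cs" using finite_distinct_list[OF Ocl_fin] by blast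
  define lam0 where "lam0 = rev (sort (map hc cs))"
  have m: "mset lam0 = mset (map hc cs)" unfolding lam0_def by simp
  have "sorted_wrt (\<ge>) lam0" unfolding lam0_def by (simp add: sorted_wrt_rev)
  moreover have "\<forall>x\<in>set lam0. 0 < x" using Ocl_card(2) cs(1) unfolding lam0_def by auto
  moreover have "sum_list lam0 = sum_list (map hc cs)" using m by (metis sum_mset_sum_list)
  then have "2 * sum_list lam0 = card G" using sum_hc[OF cs(2,1)] by simp
  moreover have "cycle_type G s = double_parts lam0" using ct[OF cs(2,1)] m unfolding double_parts_def by simp
  ultimately show ?thesis by blast
qed

lemma count_stable:
  assumes ctl: "cycle_type G s = double_parts lam"
  shows "card {p. partition_on G p \<and> image_mset card (mset_set p) = image_mset (\<lambda>k. 2 * k) (mset nu)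
     \<and> stable b p \<and> stable a p} = Rbar lam nu"
proof -
  obtain cs where cs: "set cs = Ocl" "distinct cs" using finite_distinct_list[OF Ocl_fin] by blast
  have "mset (map hc cs) = mset lam" using ct[OF cs(2,1)] ctl unfolding double_parts_def by (metis mset_half)
  then obtain f where f: "bij_betw f {..<length lam} {..<length (map hc cs)}"
      "\<forall>i<length lam. lam ! i = map hc cs ! f i"
    using permutation_Ex_bij by metis
  define m where "m = length lam"
  define cs' where "cs' = map (\<lambda>i. cs ! f i) [0..<m]"
  have fb: "bij_betw f {..<m} {..<length cs}" using f(1) unfolding m_def by simp
  have lcs': "length cs' = length lam" unfolding cs'_def m_def by simp
  have injc: "inj_on ((!) cs) {..<length cs}" using cs(2) by (simp add: inj_on_def nth_eq_iff_index_eq)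
  have "inj_on ((!) cs \<circ> f) {..<m}"
    using fb injc unfolding bij_betw_def by (intro comp_inj_on) auto
  then have "inj_on (\<lambda>i. cs ! f i) {..<m}" by (simp add: o_def)
  then have dcs': "distinct cs'" unfolding cs'_def by (simp add: distinct_map atLeast0LessThan)
  have "set cs' = (!) cs ` (f ` {..<m})" unfolding cs'_def by (auto simp: atLeast0LessThan)
  also have "\<dots> = set cs" using fb unfolding bij_betw_def by (auto simp: set_conv_nth)
  finally have scs': "set cs' = Ocl" using cs(1) by simp
  have cardcs': "card (cs' ! i) = 2 * lam ! i" if i: "i < length lam" for i
  proof -
    have fi: "f i < length cs" using fb i unfolding bij_betw_def m_def by auto
    have "cs' ! i = cs ! f i" unfolding cs'_def using i m_def by simp
    moreover have "cs ! f i \<in> Ocl" using fi cs(1) by (metis nth_mem)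
    ultimately have "card (cs' ! i) = 2 * hc (cs ! f i)" using Ocl_card(1) by simp
    also have "hc (cs ! f i) = lam ! i" using f(2) i fi by simp
    finally show ?thesis .
  qed
  have "{p. partition_on G p \<and> image_mset card (mset_set p) = image_mset (\<lambda>k. 2 * k) (mset nu)
     \<and> stable b p \<and> stable a p}
     = {p. partition_on G p \<and> (\<forall>B\<in>p. \<forall>c\<in>Ocl. c \<subseteq> B \<or> c \<inter> B = {})
            \<and> image_mset card (mset_set p) = image_mset (\<lambda>k. 2 * k) (mset nu)}"
    using stable_iff by blast
  also have "card \<dots> = Rbar lam nu"
    by (rule coarsen[OF finG Ocl_part dcs' scs' lcs' cardcs'])
  finally show ?thesis .
qed

end

lemma finite_ground: "finite (ground n)" unfolding ground_def by simp
lemma card_ground: "card (ground n) = 2 * n" unfolding ground_def by (simp add: card_cartesian_product)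

lemma pairing_twopair: "pairing n f \<Longrightarrow> pairing n g \<Longrightarrow> twopair (ground n) f g"
  unfolding pairing_def by unfold_locales (auto simp: finite_ground)

lemma involution_permutes:
  assumes "\<And>x. x \<in> S \<Longrightarrow> f x \<in> S" "\<And>x. x \<in> S \<Longrightarrow> f (f x) = x" "\<And>x. x \<notin> S \<Longrightarrow> f x = x"
  shows "f permutes S"
proof (rule bij_imp_permutes)
  show "bij_betw f S S" by (rule bij_betw_byWitness[where f'=f]) (use assms in auto)
qed (use assms in auto)

lemma f1_pairing: assumes "n \<ge> 1" shows "pairing n (f1 n)"
proof -
  have inG: "x \<in> ground n \<Longrightarrow> f1 n x \<in> ground n" for x
    using assms by (cases x) (auto simp: f1_def ground_def split: bool.splits)
  have inv: "x \<in> ground n \<Longrightarrow> f1 n (f1 n x) = x" for x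
  proof -
    assume x: "x \<in> ground n"
    then have fx: "f1 n x \<in> ground n" by (rule inG)
    obtain i t where it: "x = (i, t)" by (cases x)
    show ?thesis using x fx assms unfolding it by (cases t) (auto simp: f1_def ground_def)
  qed
  have nf: "x \<in> ground n \<Longrightarrow> f1 n x \<noteq> x" for x
    by (cases x) (auto simp: f1_def split: bool.splits)
  have "f1 n permutes ground n"
    by (rule involution_permutes) (use inG inv in \<open>auto simp: f1_def\<close>)
  then show ?thesis unfolding pairing_def using inv nf by blast
qed

lemma f2_pairing: "pairing n (f2 n)"
proof -
  have "f2 n permutes ground n"
    by (rule involution_permutes) (auto simp: f2_def ground_def)
  then show ?thesis unfolding pairing_def by (auto simp: f2_def ground_def)
qed

lemma length_le_sum: "(\<forall>x\<in>set xs. (0::nat) < x) \<Longrightarrow> length xs \<le> sum_list xs"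
  by (induct xs) auto

lemma finite_partitions: "finite (partitions n)"
proof (rule finite_subset)
  show "partitions n \<subseteq> {xs. set xs \<subseteq> {0..n} \<and> length xs \<le> n}"
    unfolding partitions_def is_partition_def
    using length_le_sum member_le_sum_list by fastforce
  show "finite {xs. set xs \<subseteq> {0..n} \<and> length xs \<le> n}"
    by (rule finite_lists_length_le) simp
qed

lemma partition_unique:
  assumes "is_partition n l1" "is_partition n l2" "double_parts l1 = double_parts l2"
  shows "l1 = l2"
proof -
  have m: "mset (rev l1) = mset (rev l2)" using assms(3) mset_half unfolding double_parts_def by simp
  have s1: "sorted (rev l1)" and s2: "sorted (rev l2)"
    using assms(1,2) unfolding is_partition_def by (simp_all add: sorted_wrt_rev)
  have "sort (rev l2) = rev l1" by (rule properties_for_sort[OF m s1])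
  moreover have "sort (rev l2) = rev l2" by (rule properties_for_sort[OF refl s2])
  ultimately show ?thesis by simp
qed

lemma comp_key:
  assumes "pairing n f" "pairing n g"
  shows "\<exists>lam0 \<in> partitions n.
    (\<forall>lam\<in>partitions n. cycle_type (ground n) (f \<circ> g) = double_parts lam \<longleftrightarrow> lam = lam0)
    \<and> (\<forall>nu. card {p. half_type n nu p \<and> stable g p \<and> stable f p} = Rbar lam0 nu)"
proof -
  interpret twopair "ground n" f g by (rule pairing_twopair[OF assms])
  obtain lam0 where l: "sorted_wrt (\<ge>) lam0" "\<forall>x\<in>set lam0. 0 < x" "2 * sum_list lam0 = card (ground n)"
    "cycle_type (ground n) s = double_parts lam0" using type_ex by blast
  have lp: "lam0 \<in> partitions n" using l(1-3) card_ground unfolding partitions_def is_partition_def by simp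
  have ctl: "cycle_type (ground n) (f \<circ> g) = double_parts lam0" using l(4) unfolding s_def .
  show ?thesis
  proof (intro bexI conjI ballI allI)
    fix lam assume "lam \<in> partitions n"
    then show "cycle_type (ground n) (f \<circ> g) = double_parts lam \<longleftrightarrow> lam = lam0"
      using partition_unique ctl lp unfolding partitions_def by auto
  next
    fix nu
    show "card {p. half_type n nu p \<and> stable g p \<and> stable f p} = Rbar lam0 nu"
      using count_stable[OF l(4), of nu] unfolding half_type_def by (simp add: conj_assoc)
  qed (rule lp)
qed

lemma sum_indicator:
  assumes "pairing n f" "pairing n g"
  shows "(\<Sum>lam\<in>partitions n. if cycle_type (ground n) (f \<circ> g) = double_parts lam then Rbar lam nu else 0)
     = card {p. half_type n nu p \<and> stable g p \<and> stable f p}"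
proof -
  obtain lam0 where l0: "lam0 \<in> partitions n"
    "\<forall>lam\<in>partitions n. cycle_type (ground n) (f \<circ> g) = double_parts lam \<longleftrightarrow> lam = lam0"
    "card {p. half_type n nu p \<and> stable g p \<and> stable f p} = Rbar lam0 nu"
    using comp_key[OF assms] by blast
  have "(\<Sum>lam\<in>partitions n. if cycle_type (ground n) (f \<circ> g) = double_parts lam then Rbar lam nu else 0)
      = (\<Sum>lam\<in>partitions n. if lam = lam0 then Rbar lam nu else 0)"
    using l0(2) by (intro sum.cong) auto
  also have "\<dots> = Rbar lam0 nu" using l0(1) finite_partitions by (simp add: sum.delta')
  finally show ?thesis using l0(3) by simp
qed

theorem proposition1:
  fixes n :: nat and nu rho :: "nat list"
  assumes "n \<ge> 1" and "is_partition n nu" and "is_partition n rho"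
  shows "LP n nu rho =
    (\<Sum>lam\<in>partitions n. \<Sum>mu\<in>partitions n. Rbar lam nu * Rbar mu rho * L n lam mu)"
proof -
  define Pr where "Pr = {f. pairing n f}"
  define A1 where "A1 f = {p. half_type n nu p \<and> stable (f1 n) p \<and> stable f p}" for f
  define A2 where "A2 f = {p. half_type n rho p \<and> stable (f2 n) p \<and> stable f p}" for f
  define ct1 where "ct1 f = cycle_type (ground n) (f \<circ> f1 n)" for f
  define ct2 where "ct2 f = cycle_type (ground n) (f \<circ> f2 n)" for f
  define P where "P = partitions n"
  have finP: "finite P" unfolding P_def by (rule finite_partitions)
  have finPr: "finite Pr"
  proof (rule finite_subset)
    show "Pr \<subseteq> {p. p permutes ground n}" unfolding Pr_def pairing_def by blast
    show "finite {p. p permutes ground n}" by (rule finite_permutations[OF finite_ground])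
  qed
  have finA: "finite {p. half_type n x p \<and> Q p}" for x Q
    by (rule finite_subset[OF _ finitely_many_partition_on[OF finite_ground]]) (auto simp: half_type_def)
  have "LP n nu rho = card (Sigma Pr (\<lambda>f. A1 f \<times> A2 f))"
    unfolding LP_def Pr_def A1_def A2_def by (rule arg_cong[where f=card]) auto
  also have "\<dots> = (\<Sum>f\<in>Pr. card (A1 f) * card (A2 f))"
    using finPr finA unfolding A1_def A2_def by (simp add: card_SigmaI card_cartesian_product)
  also have "\<dots> = (\<Sum>f\<in>Pr. \<Sum>lam\<in>P. \<Sum>mu\<in>P.
      (if ct1 f = double_parts lam \<and> ct2 f = double_parts mu then Rbar lam nu * Rbar mu rho else 0))"
  proof (rule sum.cong[OF refl])
    fix f assume "f \<in> Pr"
    then have pf: "pairing n f" unfolding Pr_def by simp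
    have "card (A1 f) * card (A2 f) =
      (\<Sum>lam\<in>P. if ct1 f = double_parts lam then Rbar lam nu else 0) *
      (\<Sum>mu\<in>P. if ct2 f = double_parts mu then Rbar mu rho else 0)"
      unfolding A1_def A2_def ct1_def ct2_def P_def
      using sum_indicator[OF pf f1_pairing[OF assms(1)]] sum_indicator[OF pf f2_pairing] by simp
    also have "\<dots> = (\<Sum>lam\<in>P. \<Sum>mu\<in>P.
      (if ct1 f = double_parts lam then Rbar lam nu else 0) * (if ct2 f = double_parts mu then Rbar mu rho else 0))"
      by (rule sum_product)
    also have "\<dots> = (\<Sum>lam\<in>P. \<Sum>mu\<in>P.
      (if ct1 f = double_parts lam \<and> ct2 f = double_parts mu then Rbar lam nu * Rbar mu rho else 0))"
      by (intro sum.cong refl) auto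
    finally show "card (A1 f) * card (A2 f) = \<dots>" .
  qed
  also have "\<dots> = (\<Sum>lam\<in>P. \<Sum>mu\<in>P. \<Sum>f\<in>Pr.
      (if ct1 f = double_parts lam \<and> ct2 f = double_parts mu then Rbar lam nu * Rbar mu rho else 0))"
    by (simp add: sum.swap[of _ Pr] sum.swap[of _ Pr P])
  also have "\<dots> = (\<Sum>lam\<in>P. \<Sum>mu\<in>P. Rbar lam nu * Rbar mu rho * L n lam mu)"
  proof (intro sum.cong refl)
    fix lam mu
    have "(\<Sum>f\<in>Pr. (if ct1 f = double_parts lam \<and> ct2 f = double_parts mu then Rbar lam nu * Rbar mu rho else 0))
        = (\<Sum>f\<in>{f\<in>Pr. ct1 f = double_parts lam \<and> ct2 f = double_parts mu}. Rbar lam nu * Rbar mu rho)"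
      by (rule sum.inter_filter[OF finPr, symmetric])
    also have "\<dots> = Rbar lam nu * Rbar mu rho * L n lam mu"
      unfolding L_def Pr_def ct1_def ct2_def by simp
    finally show "(\<Sum>f\<in>Pr. (if ct1 f = double_parts lam \<and> ct2 f = double_parts mu then Rbar lam nu * Rbar mu rho else 0))
        = Rbar lam nu * Rbar mu rho * L n lam mu" .
  qed
  finally show ?thesis unfolding P_def .
qed

end
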